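(* Let $D$ be a discrete probability distribution over a set $T$. Let $\rho$ be a mixed memory over a set $Y$ of program variables, and let $X\subseteq Y$ be a list of program variables of type $T$. Let $\rho_D:=\sum_{i\in T}D(i)|i\rangle\langle i|$, a mixed memory over $X$. Let $\mathbf{e}$ be a fresh entangled ghost variable of type $T$ and define the predicate $\mathrm{distr}(X,D) := \big(X\mathbf{e}=_q \psi^{(2)}_D\big)$ where $\psi^{(2)}_D := \sum_{i\in T}\sqrt{D(i)}\,|i\rangle\otimes|i\rangle$. Then the following are equivalent: (a) $\rho\models\mathrm{distr}(X,D)$; (b) there exists a mixed memory $\rho'$ over $Y\setminus X$ with $\rho=\rho'\otimes\rho_D$.
   Context: Variables have types and are of three disjoint kinds: program variables, entangled ghosts, unentangled ghosts. $\ell^2[V]$ is the Hilbert space with orthonormal basis indexed by assignments on $V$, identified with $\ell^2(T)$ when $V$ has type $T$; $\ell^2[V\cup W]\cong\ell^2[V]\otimes\ell^2[W]$. Mixed memories over $V$ are positive trace-class operators on $\ell^2[V]$; $\mathrm{tr}_W$ is partial trace. A mixed memory over $V\cup W$ is $(V,W)$-separable if it is a convergent sum $\sum_i\rho_i\otimes\rho_i'$ of mixed memories over $V$ and $W$. $\mathrm{supp}\,\rho$ is the closure of the range of $\rho$. A predicate over $V$ is a closed subspace of $\ell^2[V]$; for $W\subseteq V$, $(W=_q\psi):=\mathrm{span}\{\psi\}\otimes\ell^2[V\setminus W]$; predicates over different variable sets are identified if they agree after tensoring with the full spaces of missing variables. For program variables $X$, entangled ghosts $E$, unentangled ghosts $U$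 and a predicate $A$ over $X\cup E\cup U$, a mixed memory $\rho$ over $X$ satisfies $A$ ($\rho\models A$) iff there exists an $(X\cup E,U)$-separable mixed memory $\rho^\circ$ over $X\cup E\cup U$ with $\mathrm{supp}\,\rho^\circ\subseteq A$ and $\mathrm{tr}_{E\cup U}\rho^\circ=\rho$ (independent of the choice of $E,U$ containing the ghosts $A$ depends on). *)

theory Defs
  imports "HOL-Analysis.Analysis" "HOL-Probability.Probability_Mass_Function"
begin

text \<open>Vectors in \<open>\<ell>\<^sup>2('a)\<close> are represented as functions \<open>'a \<Rightarrow> complex\<close>
  that are square summable; (bounded) operators on \<open>\<ell>\<^sup>2('a)\<close> are represented by
  their matrix kernels \<open>\<rho> a b = \<langle>a|\<rho>|b\<rangle>\<close>.\<close>

definition is_l2 :: "('a \<Rightarrow> complex) \<Rightarrow> bool" where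
  "is_l2 v \<longleftrightarrow> (\<lambda>a. (cmod (v a))\<^sup>2) summable_on UNIV"

definition l2norm :: "('a \<Rightarrow> complex) \<Rightarrow> real" where
  "l2norm v = sqrt (\<Sum>\<^sub>\<infinity>a. (cmod (v a))\<^sup>2)"

text \<open>Mixed memory = positive trace-class operator, i.e. a trace-norm convergent sum
  \<open>\<Sum>\<^sub>k |v\<^sub>k\<rangle>\<langle>v\<^sub>k|\<close> with \<open>\<Sum>\<^sub>k \<parallel>v\<^sub>k\<parallel>\<^sup>2 < \<infinity>\<close> (countably many terms; finite sums via zero terms).\<close>
definition mixed :: "('a \<Rightarrow> 'a \<Rightarrow> complex) \<Rightarrow> bool" where
  "mixed \<rho> \<longleftrightarrow> (\<exists>v :: nat \<Rightarrow> 'a \<Rightarrow> complex.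
      (\<forall>k. is_l2 (v k)) \<and> summable (\<lambda>k. (l2norm (v k))\<^sup>2) \<and>
      (\<forall>a b. (\<lambda>k. v k a * cnj (v k b)) sums \<rho> a b))"

definition op_apply :: "('a \<Rightarrow> 'b \<Rightarrow> complex) \<Rightarrow> ('b \<Rightarrow> complex) \<Rightarrow> ('a \<Rightarrow> complex)" where
  "op_apply \<rho> u = (\<lambda>a. \<Sum>\<^sub>\<infinity>b. \<rho> a b * u b)"

definition op_range :: "('a \<Rightarrow> 'a \<Rightarrow> complex) \<Rightarrow> ('a \<Rightarrow> complex) set" where
  "op_range \<rho> = {w. \<exists>u. is_l2 u \<and> w = op_apply \<rho> u}"

definition supp :: "('a \<Rightarrow> 'a \<Rightarrow> complex) \<Rightarrow> ('a \<Rightarrow> complex) set" where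
  "supp \<rho> = {w. is_l2 w \<and> (\<forall>\<epsilon>>0. \<exists>r\<in>op_range \<rho>. l2norm (\<lambda>a. w a - r a) < \<epsilon>)}"

definition tensor_op :: "('a \<Rightarrow> 'a \<Rightarrow> complex) \<Rightarrow> ('b \<Rightarrow> 'b \<Rightarrow> complex)
    \<Rightarrow> ('a \<times> 'b) \<Rightarrow> ('a \<times> 'b) \<Rightarrow> complex" where
  "tensor_op \<rho> \<sigma> = (\<lambda>p q. \<rho> (fst p) (fst q) * \<sigma> (snd p) (snd q))"

text \<open>\<open>(V,W)\<close>-separability of a mixed memory over \<open>V \<union> W\<close> (assignments \<open>'a \<times> 'b\<close>).\<close>
definition separable :: "(('a \<times> 'b) \<Rightarrow> ('a \<times> 'b) \<Rightarrow> complex) \<Rightarrow> bool" where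
  "separable \<rho> \<longleftrightarrow> (\<exists>(f :: nat \<Rightarrow> 'a \<Rightarrow> 'a \<Rightarrow> complex) (g :: nat \<Rightarrow> 'b \<Rightarrow> 'b \<Rightarrow> complex).
      (\<forall>i. mixed (f i) \<and> mixed (g i)) \<and>
      (\<forall>p q. (\<lambda>i. tensor_op (f i) (g i) p q) sums \<rho> p q))"

text \<open>Partial trace over the ghosts \<open>E \<union> U\<close>; memories over \<open>Y \<union> E \<union> U\<close> are laid out as
  \<open>((y, e), u)\<close>.\<close>
definition ptrace_EU :: "((('y \<times> 'e) \<times> 'u) \<Rightarrow> (('y \<times> 'e) \<times> 'u) \<Rightarrow> complex) \<Rightarrow> 'y \<Rightarrow> 'y \<Rightarrow> complex" where
  "ptrace_EU \<rho> = (\<lambda>y y'. \<Sum>\<^sub>\<infinity>(e, u). \<rho> ((y, e), u) ((y', e), u))"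

text \<open>A predicate over \<open>Y \<union> E\<close>, tensored with the full space \<open>\<ell>\<^sup>2[U]\<close>.\<close>
definition pred_ext_U :: "(('z) \<Rightarrow> complex) set \<Rightarrow> (('z \<times> 'u) \<Rightarrow> complex) set" where
  "pred_ext_U A = {w. is_l2 w \<and> (\<forall>u. (\<lambda>z. w (z, u)) \<in> A)}"

text \<open>Satisfaction \<open>\<rho> \<Turnstile> A\<close> for a mixed memory \<open>\<rho>\<close> over program variables \<open>Y\<close>
  (assignments \<open>'y\<close>), a predicate \<open>A\<close> over \<open>Y \<union> E\<close> with entangled ghosts \<open>E\<close>
  (assignments \<open>'e\<close>), and unentangled ghosts \<open>U\<close> (assignments \<open>'u\<close>).\<close>
definition models :: "'u itself \<Rightarrow> ('y \<Rightarrow> 'y \<Rightarrow> complex) \<Rightarrow> (('y \<times> 'e) \<Rightarrow> complex) set \<Rightarrow> bool" where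
  "models _ \<rho> A \<longleftrightarrow> (\<exists>\<rho>c :: (('y \<times> 'e) \<times> 'u) \<Rightarrow> (('y \<times> 'e) \<times> 'u) \<Rightarrow> complex.
      mixed \<rho>c \<and> separable \<rho>c \<and> supp \<rho>c \<subseteq> pred_ext_U A \<and> ptrace_EU \<rho>c = \<rho>)"

definition rhoD :: "'t pmf \<Rightarrow> 't \<Rightarrow> 't \<Rightarrow> complex" where
  "rhoD D = (\<lambda>i j. if i = j then complex_of_real (pmf D i) else 0)"

definition psiD :: "'t pmf \<Rightarrow> ('t \<times> 't) \<Rightarrow> complex" where
  "psiD D = (\<lambda>(x, e). if x = e then complex_of_real (sqrt (pmf D x)) else 0)"

text \<open>\<open>distr(X,D) = (X e =\<^sub>q \<psi>\<^sup>(\<^sup>2\<^sup>)\<^sub>D) = span{\<psi>} \<otimes> \<ell>\<^sup>2[Y\<setminus>X]\<close>, as a predicate over \<open>Y \<union> {e}\<close>,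
  where assignments of \<open>Y\<close> are pairs \<open>(r, x)\<close> (\<open>r\<close> assigns \<open>Y\<setminus>X\<close>, \<open>x\<close> the value of \<open>X\<close>)
  and the full memory is \<open>((r, x), e)\<close>.\<close>
definition distr :: "'t pmf \<Rightarrow> ((('r \<times> 't) \<times> 't) \<Rightarrow> complex) set" where
  "distr D = {w. \<exists>\<phi>. is_l2 \<phi> \<and> (\<forall>r x e. w ((r, x), e) = \<phi> r * psiD D (x, e))}"

end

theory Submission
  imports Defs
begin


lemma l2norm_nonneg: "0 \<le> l2norm f"
  by (simp add: l2norm_def infsum_nonneg)

lemma l2norm_sq: "(l2norm f)\<^sup>2 = (\<Sum>\<^sub>\<infinity>a. (cmod (f a))\<^sup>2)"
  unfolding l2norm_def by (simp add: infsum_nonneg)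

lemma l2_point_sq:
  assumes "is_l2 f" shows "(cmod (f a))\<^sup>2 \<le> (l2norm f)\<^sup>2"
proof -
  have "sum (\<lambda>a. (cmod (f a))\<^sup>2) {a} \<le> (\<Sum>\<^sub>\<infinity>a. (cmod (f a))\<^sup>2)"
    using assms unfolding is_l2_def by (intro finite_sum_le_infsum) auto
  then show ?thesis by (simp add: l2norm_sq)
qed

lemma l2_point:
  assumes "is_l2 f" shows "cmod (f a) \<le> l2norm f"
  using l2_point_sq[OF assms] l2norm_nonneg power2_le_imp_le by blast

lemma l2_diff:
  assumes "is_l2 f" "is_l2 g" shows "is_l2 (\<lambda>a. f a - g a)"
proof -
  have s: "(\<lambda>a. 2 * (cmod (f a))\<^sup>2 + 2 * (cmod (g a))\<^sup>2) summable_on UNIV"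
    using assms unfolding is_l2_def
    by (intro summable_on_add summable_on_cmult_right) auto
  have "(cmod (f a - g a))\<^sup>2 \<le> 2 * (cmod (f a))\<^sup>2 + 2 * (cmod (g a))\<^sup>2" for a
  proof -
    have "cmod (f a - g a) \<le> cmod (f a) + cmod (g a)" by (rule norm_triangle_ineq4)
    then have "(cmod (f a - g a))\<^sup>2 \<le> (cmod (f a) + cmod (g a))\<^sup>2"
      by (simp add: power_mono)
    also have "\<dots> \<le> 2 * (cmod (f a))\<^sup>2 + 2 * (cmod (g a))\<^sup>2"
      by (simp add: power2_sum) (smt (verit) sum_squares_bound)
    finally show ?thesis .
  qed
  then show ?thesis unfolding is_l2_def
    by (intro summable_on_comparison_test[OF s]) auto
qed

lemma CS_finite:
  "(cmod (\<Sum>k\<in>F. x k * y k))\<^sup>2 \<le> (\<Sum>k\<in>F. (cmod (x k))\<^sup>2) * (\<Sum>k\<in>F. (cmod (y k))\<^sup>2)"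
proof -
  have "cmod (\<Sum>k\<in>F. x k * y k) \<le> (\<Sum>k\<in>F. cmod (x k) * cmod (y k))"
    using norm_sum[of "\<lambda>k. x k * y k" F] by (simp add: norm_mult)
  then have "(cmod (\<Sum>k\<in>F. x k * y k))\<^sup>2 \<le> (\<Sum>k\<in>F. cmod (x k) * cmod (y k))\<^sup>2"
    by (simp add: power_mono)
  also have "\<dots> \<le> (\<Sum>k\<in>F. (cmod (x k))\<^sup>2) * (\<Sum>k\<in>F. (cmod (y k))\<^sup>2)"
    by (rule Cauchy_Schwarz_ineq_sum)
  finally show ?thesis .
qed

lemma CS_series:
  assumes "(\<lambda>k. x k * y k) sums s" "summable (\<lambda>k. (cmod (x k))\<^sup>2)" "summable (\<lambda>k. (cmod (y k))\<^sup>2)"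
  shows "(cmod s)\<^sup>2 \<le> (\<Sum>k. (cmod (x k))\<^sup>2) * (\<Sum>k. (cmod (y k))\<^sup>2)"
proof (rule LIMSEQ_le_const2)
  show "(\<lambda>n. (cmod (\<Sum>k<n. x k * y k))\<^sup>2) \<longlonglongrightarrow> (cmod s)\<^sup>2"
    using assms(1) unfolding sums_def by (intro tendsto_intros)
  show "\<exists>N. \<forall>n\<ge>N. (cmod (\<Sum>k<n. x k * y k))\<^sup>2 \<le> (\<Sum>k. (cmod (x k))\<^sup>2) * (\<Sum>k. (cmod (y k))\<^sup>2)"
  proof (intro exI allI impI)
    fix n :: nat
    have "(cmod (\<Sum>k<n. x k * y k))\<^sup>2 \<le> (\<Sum>k<n. (cmod (x k))\<^sup>2) * (\<Sum>k<n. (cmod (y k))\<^sup>2)"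
      by (rule CS_finite)
    also have "\<dots> \<le> (\<Sum>k. (cmod (x k))\<^sup>2) * (\<Sum>k. (cmod (y k))\<^sup>2)"
    proof (rule mult_mono)
      show "(\<Sum>k<n. (cmod (x k))\<^sup>2) \<le> (\<Sum>k. (cmod (x k))\<^sup>2)"
        using assms(2) by (rule sum_le_suminf) auto
      show "(\<Sum>k<n. (cmod (y k))\<^sup>2) \<le> (\<Sum>k. (cmod (y k))\<^sup>2)"
        using assms(3) by (rule sum_le_suminf) auto
      show "0 \<le> (\<Sum>k. (cmod (x k))\<^sup>2)"
        using assms(2) by (rule suminf_nonneg) auto
      show "0 \<le> (\<Sum>k<n. (cmod (y k))\<^sup>2)"
        by (rule sum_nonneg) auto
    qed
    finally show "(cmod (\<Sum>k<n. x k * y k))\<^sup>2 \<le> (\<Sum>k. (cmod (x k))\<^sup>2) * (\<Sum>k. (cmod (y k))\<^sup>2)" .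
  qed
qed

lemma mixed_diag:
  assumes v: "\<And>k. is_l2 (v k)" "summable (\<lambda>k. (l2norm (v k))\<^sup>2)"
  shows "summable (\<lambda>k. (cmod (v k a))\<^sup>2)"
  by (rule summable_comparison_test'[OF v(2), of 0]) (simp add: l2_point_sq v(1))

lemma finsum_le_l2:
  assumes "is_l2 f" "finite F"
  shows "(\<Sum>a\<in>F. (cmod (f a))\<^sup>2) \<le> (l2norm f)\<^sup>2"
  unfolding l2norm_sq using assms unfolding is_l2_def
  by (intro finite_sum_le_infsum) auto

lemma mixed_diag_summable:
  assumes v: "\<And>k. is_l2 (v k)" "summable (\<lambda>k. (l2norm (v k))\<^sup>2)"
  shows "(\<lambda>a. \<Sum>k. (cmod (v k a))\<^sup>2) summable_on UNIV"
proof (rule nonneg_bdd_above_summable_on)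
  show "0 \<le> (\<Sum>k. (cmod (v k a))\<^sup>2)" for a
    using mixed_diag[OF v] by (rule suminf_nonneg) auto
  show "bdd_above (sum (\<lambda>a. \<Sum>k. (cmod (v k a))\<^sup>2) ` {F. F \<subseteq> UNIV \<and> finite F})"
  proof (rule bdd_aboveI2)
    fix F assume "F \<in> {F. F \<subseteq> (UNIV::'a set) \<and> finite F}"
    then have F: "finite F" by auto
    have "(\<Sum>a\<in>F. \<Sum>k. (cmod (v k a))\<^sup>2) = (\<Sum>k. \<Sum>a\<in>F. (cmod (v k a))\<^sup>2)"
      using mixed_diag[OF v] by (intro suminf_sum[symmetric]) auto
    also have "\<dots> \<le> (\<Sum>k. (l2norm (v k))\<^sup>2)"
    proof (rule suminf_le)
      show "(\<Sum>a\<in>F. (cmod (v k a))\<^sup>2) \<le> (l2norm (v k))\<^sup>2" for k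
        using finsum_le_l2[OF v(1) F] .
      show "summable (\<lambda>k. \<Sum>a\<in>F. (cmod (v k a))\<^sup>2)"
        using mixed_diag[OF v] by (intro summable_sum) auto
    qed (rule v(2))
    finally show "(\<Sum>a\<in>F. \<Sum>k. (cmod (v k a))\<^sup>2) \<le> (\<Sum>k. (l2norm (v k))\<^sup>2)" .
  qed
qed

lemma op_apply_l2:
  assumes "mixed \<rho>" "is_l2 u"
  shows "is_l2 (op_apply \<rho> u)"
proof -
  obtain v where v1: "\<And>k. is_l2 (v k)" and v2: "summable (\<lambda>k. (l2norm (v k))\<^sup>2)"
    and v3: "\<And>a b. (\<lambda>k. v k a * cnj (v k b)) sums \<rho> a b"
    using assms(1) unfolding mixed_def by blast
  define T where "T = (\<Sum>k. (l2norm (v k))\<^sup>2)"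
  define U where "U = (l2norm u)\<^sup>2"
  define d where "d a = (\<Sum>k. (cmod (v k a))\<^sup>2)" for a
  have T0: "0 \<le> T" unfolding T_def using v2 by (rule suminf_nonneg) auto
  have U0: "0 \<le> U" unfolding U_def by simp
  have d0: "0 \<le> d a" for a unfolding d_def using mixed_diag[OF v1 v2] by (rule suminf_nonneg) auto
  have dsum: "d summable_on UNIV" unfolding d_def using mixed_diag_summable[OF v1 v2] .
  have fin: "(cmod (sum (\<lambda>b. \<rho> a b * u b) F))\<^sup>2 \<le> T * U * d a" if F: "finite F" for a F
  proof -
    define y where "y k = (\<Sum>b\<in>F. cnj (v k b) * u b)" for k
    have s: "(\<lambda>k. v k a * y k) sums sum (\<lambda>b. \<rho> a b * u b) F"
    proof -
      have "(\<lambda>k. \<Sum>b\<in>F. v k a * cnj (v k b) * u b) sums (\<Sum>b\<in>F. \<rho> a b * u b)"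
        by (intro sums_sum sums_mult2 v3)
      then show ?thesis unfolding y_def by (simp add: sum_distrib_left mult.assoc)
    qed
    have ybound: "(cmod (y k))\<^sup>2 \<le> (l2norm (v k))\<^sup>2 * U" for k
    proof -
      have "(cmod (y k))\<^sup>2 \<le> (\<Sum>b\<in>F. (cmod (cnj (v k b)))\<^sup>2) * (\<Sum>b\<in>F. (cmod (u b))\<^sup>2)"
        unfolding y_def by (rule CS_finite)
      also have "\<dots> \<le> (l2norm (v k))\<^sup>2 * U"
        unfolding U_def using finsum_le_l2[OF v1 F] finsum_le_l2[OF assms(2) F]
        by (intro mult_mono) (auto intro: sum_nonneg)
      finally show ?thesis .
    qed
    have ysum: "summable (\<lambda>k. (cmod (y k))\<^sup>2)"
      by (rule summable_comparison_test'[of "\<lambda>k. (l2norm (v k))\<^sup>2 * U" 0])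
        (use v2 ybound in \<open>auto intro: summable_mult2\<close>)
    have "(\<Sum>k. (cmod (y k))\<^sup>2) \<le> (\<Sum>k. (l2norm (v k))\<^sup>2 * U)"
      using ysum v2 ybound by (intro suminf_le) (auto intro: summable_mult2)
    also have "\<dots> = T * U" unfolding T_def using v2 by (rule suminf_mult2[symmetric])
    finally have yT: "(\<Sum>k. (cmod (y k))\<^sup>2) \<le> T * U" .
    have "(cmod (sum (\<lambda>b. \<rho> a b * u b) F))\<^sup>2 \<le> d a * (\<Sum>k. (cmod (y k))\<^sup>2)"
      unfolding d_def by (rule CS_series[OF s mixed_diag[OF v1 v2] ysum])
    also have "\<dots> \<le> d a * (T * U)" using yT d0 by (rule mult_left_mono)
    finally show ?thesis by (simp add: algebra_simps)
  qed
  have pt: "(cmod (op_apply \<rho> u a))\<^sup>2 \<le> T * U * d a" for a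
  proof (cases "(\<lambda>b. \<rho> a b * u b) summable_on UNIV")
    case True
    then have "((\<lambda>b. \<rho> a b * u b) has_sum op_apply \<rho> u a) UNIV"
      unfolding op_apply_def by (rule has_sum_infsum)
    then have lim: "(sum (\<lambda>b. \<rho> a b * u b) \<longlongrightarrow> op_apply \<rho> u a) (finite_subsets_at_top UNIV)"
      by (simp add: has_sum_def)
    show ?thesis
    proof (rule tendsto_le[OF _ tendsto_const])
      show "finite_subsets_at_top UNIV \<noteq> bot" by simp
      show "((\<lambda>F. (cmod (sum (\<lambda>b. \<rho> a b * u b) F))\<^sup>2) \<longlongrightarrow> (cmod (op_apply \<rho> u a))\<^sup>2) (finite_subsets_at_top UNIV)"
        using lim by (intro tendsto_intros)
      show "\<forall>\<^sub>F F in finite_subsets_at_top UNIV. (cmod (sum (\<lambda>b. \<rho> a b * u b) F))\<^sup>2 \<le> T * U * d a"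
        using fin by (simp add: eventually_finite_subsets_at_top_weakI)
    qed
  next
    case False
    then have "op_apply \<rho> u a = 0" unfolding op_apply_def by (simp add: infsum_not_exists)
    then show ?thesis using T0 U0 d0 by simp
  qed
  show ?thesis unfolding is_l2_def
  proof (rule summable_on_comparison_test[of "\<lambda>a. T * U * d a"])
    show "(\<lambda>a. T * U * d a) summable_on UNIV" using dsum by (rule summable_on_cmult_right)
  qed (use pt in auto)
qed

lemma mixed_pull:
  assumes "mixed \<rho>" "0 \<le> C"
    and l2: "\<And>w. is_l2 w \<Longrightarrow> is_l2 (\<lambda>b. w (h b) * \<phi> b) \<and> l2norm (\<lambda>b. w (h b) * \<phi> b) \<le> C * l2norm w"
  shows "mixed (\<lambda>b b'. \<rho> (h b) (h b') * (\<phi> b * cnj (\<phi> b')))"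
proof -
  obtain v where v1: "\<And>k. is_l2 (v k)" and v2: "summable (\<lambda>k. (l2norm (v k))\<^sup>2)"
    and v3: "\<And>a b. (\<lambda>k. v k a * cnj (v k b)) sums \<rho> a b"
    using assms(1) unfolding mixed_def by blast
  define v' where "v' k b = v k (h b) * \<phi> b" for k b
  have 1: "is_l2 (v' k)" for k unfolding v'_def using l2[OF v1] by blast
  have le: "(l2norm (v' k))\<^sup>2 \<le> C\<^sup>2 * (l2norm (v k))\<^sup>2" for k
  proof -
    have "l2norm (v' k) \<le> C * l2norm (v k)" unfolding v'_def using l2[OF v1] by blast
    then have "(l2norm (v' k))\<^sup>2 \<le> (C * l2norm (v k))\<^sup>2"
      by (intro power_mono) (auto simp: l2norm_nonneg)
    then show ?thesis by (simp add: power_mult_distrib)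
  qed
  have 2: "summable (\<lambda>k. (l2norm (v' k))\<^sup>2)"
    by (rule summable_comparison_test'[of "\<lambda>k. C\<^sup>2 * (l2norm (v k))\<^sup>2" 0])
      (use v2 le in \<open>auto intro: summable_mult\<close>)
  have 3: "(\<lambda>k. v' k b * cnj (v' k b')) sums (\<rho> (h b) (h b') * (\<phi> b * cnj (\<phi> b')))" for b b'
  proof -
    have "(\<lambda>k. v k (h b) * cnj (v k (h b')) * (\<phi> b * cnj (\<phi> b'))) sums (\<rho> (h b) (h b') * (\<phi> b * cnj (\<phi> b')))"
      by (intro sums_mult2 v3)
    then show ?thesis unfolding v'_def by (simp add: algebra_simps)
  qed
  show ?thesis unfolding mixed_def using 1 2 3 by blast
qed

lemma l2_embed:
  assumes "inj j" "\<And>b. b \<notin> range j \<Longrightarrow> f b = 0"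
  shows "is_l2 f \<longleftrightarrow> is_l2 (f \<circ> j)" and "l2norm f = l2norm (f \<circ> j)"
proof -
  have "(\<lambda>a. (cmod (f a))\<^sup>2) summable_on UNIV \<longleftrightarrow> (\<lambda>a. (cmod (f a))\<^sup>2) summable_on range j"
    using assms(2) by (intro summable_on_cong_neutral) auto
  also have "\<dots> \<longleftrightarrow> ((\<lambda>a. (cmod (f a))\<^sup>2) \<circ> j) summable_on UNIV"
    using assms(1) by (intro summable_on_reindex) (simp add: inj_on_def inj_def)
  finally show "is_l2 f \<longleftrightarrow> is_l2 (f \<circ> j)" unfolding is_l2_def by (simp add: o_def)
  have "(\<Sum>\<^sub>\<infinity>a. (cmod (f a))\<^sup>2) = infsum (\<lambda>a. (cmod (f a))\<^sup>2) (range j)"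
    using assms(2) by (intro infsum_cong_neutral) auto
  also have "\<dots> = infsum ((\<lambda>a. (cmod (f a))\<^sup>2) \<circ> j) UNIV"
    using assms(1) by (intro infsum_reindex) (simp add: inj_on_def inj_def)
  finally show "l2norm f = l2norm (f \<circ> j)" unfolding l2norm_def by (simp add: o_def)
qed

lemma l2_restrict:
  assumes "inj j" "is_l2 w"
  shows "is_l2 (w \<circ> j)" and "l2norm (w \<circ> j) \<le> l2norm w"
proof -
  have s: "(\<lambda>a. (cmod (w a))\<^sup>2) summable_on UNIV" using assms(2) unfolding is_l2_def .
  then have "(\<lambda>a. (cmod (w a))\<^sup>2) summable_on range j"
    by (rule summable_on_subset_banach) simp
  then have s2: "((\<lambda>a. (cmod (w a))\<^sup>2) \<circ> j) summable_on UNIV"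
    using assms(1) by (subst summable_on_reindex[symmetric]) (simp_all add: inj_on_def inj_def)
  then show "is_l2 (w \<circ> j)" unfolding is_l2_def by (simp add: o_def)
  have "infsum ((\<lambda>a. (cmod (w a))\<^sup>2) \<circ> j) UNIV = infsum (\<lambda>a. (cmod (w a))\<^sup>2) (range j)"
    using assms(1) by (intro infsum_reindex[symmetric]) (simp add: inj_on_def inj_def)
  also have "\<dots> \<le> infsum (\<lambda>a. (cmod (w a))\<^sup>2) UNIV"
    using s by (intro infsum_mono_neutral summable_on_subset_banach[OF s]) auto
  finally show "l2norm (w \<circ> j) \<le> l2norm w" unfolding l2norm_def by (simp add: o_def)
qed

lemma l2_scale:
  assumes "is_l2 f"
  shows "is_l2 (\<lambda>a. f a * c)" and "l2norm (\<lambda>a. f a * c) = cmod c * l2norm f"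
proof -
  have e: "(\<lambda>a. (cmod (f a * c))\<^sup>2) = (\<lambda>a. (cmod c)\<^sup>2 * (cmod (f a))\<^sup>2)"
    by (simp add: norm_mult power_mult_distrib mult.commute)
  show "is_l2 (\<lambda>a. f a * c)" using assms unfolding is_l2_def e
    by (rule summable_on_cmult_right)
  have "(\<Sum>\<^sub>\<infinity>a. (cmod (f a * c))\<^sup>2) = (cmod c)\<^sup>2 * (\<Sum>\<^sub>\<infinity>a. (cmod (f a))\<^sup>2)"
    unfolding e by (rule infsum_cmult_right')
  then show "l2norm (\<lambda>a. f a * c) = cmod c * l2norm f"
    unfolding l2norm_def by (simp add: real_sqrt_mult)
qed

lemma sum_pmf_le_1: "finite S \<Longrightarrow> sum (pmf D) S \<le> 1"
  using measure_measure_pmf_finite[of S D] measure_pmf.prob_le_1[of D S] by simp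

lemma prod_bound:
  assumes "is_l2 w"
  shows "(\<lambda>p. (cmod (w (fst p)))\<^sup>2 * pmf D (snd p)) summable_on UNIV"
    and "(\<Sum>\<^sub>\<infinity>p. (cmod (w (fst p)))\<^sup>2 * pmf D (snd p)) \<le> (l2norm w)\<^sup>2"
proof -
  let ?g = "\<lambda>p. (cmod (w (fst p)))\<^sup>2 * pmf D (snd p)"
  have fb: "sum ?g F \<le> (l2norm w)\<^sup>2" if F: "finite F" for F
  proof -
    have "sum ?g F \<le> sum ?g (fst ` F \<times> snd ` F)"
      using F by (intro sum_mono2) force+
    also have "\<dots> = (\<Sum>r\<in>fst ` F. (cmod (w r))\<^sup>2) * (\<Sum>x\<in>snd ` F. pmf D x)"
      by (simp add: sum_product sum.cartesian_product case_prod_beta)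
    also have "\<dots> \<le> (l2norm w)\<^sup>2 * 1"
      using finsum_le_l2[OF assms, of "fst ` F"] sum_pmf_le_1[of "snd ` F" D] F
      by (intro mult_mono) (auto intro: sum_nonneg)
    finally show ?thesis by simp
  qed
  show s: "?g summable_on UNIV"
    by (rule nonneg_bdd_above_summable_on) (auto intro!: bdd_aboveI2 fb)
  show "infsum ?g UNIV \<le> (l2norm w)\<^sup>2"
    using s fb by (rule infsum_le_finite_sums)
qed

lemma psi_l2:
  fixes D :: "'t pmf" and w :: "'r \<Rightarrow> complex"
  assumes "is_l2 w"
  shows "is_l2 (\<lambda>z::('r \<times> 't) \<times> 't. w (fst (fst z)) * psiD D (snd (fst z), snd z))
       \<and> l2norm (\<lambda>z::('r \<times> 't) \<times> 't. w (fst (fst z)) * psiD D (snd (fst z), snd z)) \<le> 1 * l2norm w"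
proof -
  let ?F = "\<lambda>z::('r \<times> 't) \<times> 't. w (fst (fst z)) * psiD D (snd (fst z), snd z)"
  define j :: "'r \<times> 't \<Rightarrow> ('r \<times> 't) \<times> 't" where "j p = (p, snd p)" for p
  have ij: "inj j" unfolding j_def inj_def by auto
  have z: "?F b = 0" if "b \<notin> range j" for b
  proof -
    obtain r x e where b: "b = ((r, x), e)" by (metis prod.collapse)
    have "x \<noteq> e" using that unfolding b j_def by (metis rangeI snd_conv)
    then show ?thesis unfolding b psiD_def by simp
  qed
  have c: "(cmod ((?F \<circ> j) p))\<^sup>2 = (cmod (w (fst p)))\<^sup>2 * pmf D (snd p)" for p
    by (cases p) (simp add: j_def psiD_def norm_mult power_mult_distrib)
  have "is_l2 (?F \<circ> j)" unfolding is_l2_def c using prod_bound(1)[OF assms] .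
  moreover have "l2norm (?F \<circ> j) \<le> l2norm w"
  proof -
    have "l2norm (?F \<circ> j) = sqrt (\<Sum>\<^sub>\<infinity>p. (cmod (w (fst p)))\<^sup>2 * pmf D (snd p))"
      unfolding l2norm_def c ..
    also have "\<dots> \<le> sqrt ((l2norm w)\<^sup>2)"
      using prod_bound(2)[OF assms] by (rule real_sqrt_le_mono)
    also have "\<dots> = l2norm w" by (simp add: l2norm_nonneg)
    finally show ?thesis .
  qed
  ultimately show ?thesis using l2_embed[OF ij, of ?F] z by simp
qed



lemma mixed_zero: "mixed (\<lambda>_ _. 0)"
  unfolding mixed_def
  by (rule exI[of _ "\<lambda>_ _. 0"]) (simp add: is_l2_def l2norm_def)

lemma mixed_unit: "mixed (\<lambda>(_::unit) (_::unit). (1::complex))"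
  unfolding mixed_def
proof (intro exI[of _ "\<lambda>k (_::unit). if k = 0 then (1::complex) else 0"] conjI allI)
  show "is_l2 (\<lambda>(_::unit). if k = 0 then (1::complex) else 0)" for k
    unfolding is_l2_def by (rule summable_on_finite) simp
  show "summable (\<lambda>k. (l2norm (\<lambda>(_::unit). if k = 0 then (1::complex) else 0))\<^sup>2)"
    by (rule summable_finite[of "{0}"]) (auto simp: l2norm_def)
  show "(\<lambda>k. (if k = 0 then 1 else 0) * cnj (if k = 0 then 1 else 0)) sums (1::complex)"
    for a b :: unit
    using sums_single[of 0 "\<lambda>_. 1::complex"] by (simp add: if_distrib cong: if_cong)
qed

lemma pmf_pos_ex: "\<exists>x0. 0 < pmf D x0"
  using set_pmf_not_empty[of D] by (auto simp: set_pmf_eq order.strict_iff_order)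

lemma dir_ba:
  fixes D :: "'t pmf" and \<rho>' :: "'r \<Rightarrow> 'r \<Rightarrow> complex"
  assumes m': "mixed \<rho>'"
  shows "models TYPE('u) (tensor_op \<rho>' (rhoD D)) (distr D)"
proof -
  define u0 :: 'u where "u0 = undefined"
  define \<delta> :: "'u \<Rightarrow> complex" where "\<delta> u = (if u = u0 then 1 else 0)" for u
  define f0 :: "('r \<times> 't) \<times> 't \<Rightarrow> ('r \<times> 't) \<times> 't \<Rightarrow> complex" where
    "f0 = (\<lambda>z z'. \<rho>' (fst (fst z)) (fst (fst z')) * (psiD D (snd (fst z), snd z) * cnj (psiD D (snd (fst z'), snd z'))))"
  define g0 :: "'u \<Rightarrow> 'u \<Rightarrow> complex" where "g0 = (\<lambda>u u'. \<delta> u * cnj (\<delta> u'))"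
  define \<rho>c where "\<rho>c = tensor_op f0 g0"
  have f0m: "mixed f0" unfolding f0_def
    by (rule mixed_pull[OF m', where C=1 and h="\<lambda>z. fst (fst z)" and \<phi>="\<lambda>z. psiD D (snd (fst z), snd z)"])
      (use psi_l2 in auto)
  have g0m: "mixed g0"
  proof -
    have "mixed (\<lambda>u u'. (\<lambda>(_::unit) (_::unit). (1::complex)) ((\<lambda>_. ()) u) ((\<lambda>_. ()) u') * (\<delta> u * cnj (\<delta> u')))"
    proof (rule mixed_pull[OF mixed_unit, where C=1])
      fix w :: "unit \<Rightarrow> complex" assume w: "is_l2 w"
      let ?F = "\<lambda>b. w () * \<delta> b"
      have ij: "inj (\<lambda>_::unit. u0)" by (simp add: inj_def)
      have "?F \<circ> (\<lambda>_::unit. u0) = w" by (auto simp: \<delta>_def)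
      moreover have "?F b = 0" if "b \<notin> range (\<lambda>_::unit. u0)" for b using that by (auto simp: \<delta>_def)
      ultimately show "is_l2 (\<lambda>b. w ((\<lambda>_. ()) b) * \<delta> b) \<and> l2norm (\<lambda>b. w ((\<lambda>_. ()) b) * \<delta> b) \<le> 1 * l2norm w"
        using l2_embed[OF ij, of ?F] w by simp
    qed simp
    then show ?thesis unfolding g0_def by simp
  qed
  have \<rho>cm: "mixed \<rho>c"
  proof -
    have "mixed (\<lambda>b b'. f0 (fst b) (fst b') * (\<delta> (snd b) * cnj (\<delta> (snd b'))))"
    proof (rule mixed_pull[OF f0m, where C=1])
      fix w :: "('r \<times> 't) \<times> 't \<Rightarrow> complex" assume w: "is_l2 w"
      let ?F = "\<lambda>b. w (fst b) * \<delta> (snd b)"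
      define j where "j z = (z, u0)" for z :: "('r \<times> 't) \<times> 't"
      have ij: "inj j" by (simp add: inj_def j_def)
      have "?F \<circ> j = w" by (auto simp: \<delta>_def j_def)
      moreover have "?F b = 0" if "b \<notin> range j" for b
        using that by (cases b) (auto simp: \<delta>_def j_def)
      ultimately show "is_l2 ?F \<and> l2norm ?F \<le> 1 * l2norm w"
        using l2_embed[OF ij, of ?F] w by simp
    qed simp
    then show ?thesis unfolding \<rho>c_def tensor_op_def g0_def by simp
  qed
  have sep: "separable \<rho>c"
  proof -
    define F where "F i = (if i = 0 then f0 else (\<lambda>_ _. 0))" for i :: nat
    define G where "G i = (if i = 0 then g0 else (\<lambda>_ _. 0))" for i :: nat
    have 1: "mixed (F i) \<and> mixed (G i)" for i
      using f0m g0m by (simp add: F_def G_def mixed_zero)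
    have 2: "(\<lambda>i. tensor_op (F i) (G i) p q) sums \<rho>c p q" for p q
    proof -
      have e: "(\<lambda>i. tensor_op (F i) (G i) p q) = (\<lambda>i. if i = 0 then \<rho>c p q else 0)"
        by (auto simp: tensor_op_def \<rho>c_def F_def G_def)
      show ?thesis unfolding e using sums_single[of 0 "\<lambda>_. \<rho>c p q"] by simp
    qed
    show ?thesis unfolding separable_def using 1 2 by blast
  qed
  have ptr: "ptrace_EU \<rho>c = tensor_op \<rho>' (rhoD D)"
  proof (intro ext)
    fix y y' :: "'r \<times> 't"
    obtain r x where y: "y = (r, x)" by (cases y)
    obtain r' x' where y': "y' = (r', x')" by (cases y')
    let ?h = "\<lambda>(e, u). \<rho>c ((y, e), u) ((y', e), u)"
    have "infsum ?h UNIV = infsum ?h {(x, u0)}"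
      by (rule infsum_cong_neutral)
        (auto simp: y y' \<rho>c_def tensor_op_def f0_def g0_def \<delta>_def psiD_def split: if_splits)
    also have "\<dots> = \<rho>' r r' * rhoD D x x'"
      by (auto simp: y y' \<rho>c_def tensor_op_def f0_def g0_def \<delta>_def psiD_def rhoD_def
          of_real_mult[symmetric] real_sqrt_mult_self)
    finally show "ptrace_EU \<rho>c y y' = tensor_op \<rho>' (rhoD D) y y'"
      unfolding ptrace_EU_def by (simp add: y y' tensor_op_def)
  qed
  have supp: "supp \<rho>c \<subseteq> pred_ext_U (distr D)"
  proof
    fix w assume w: "w \<in> supp \<rho>c"
    then have wl2: "is_l2 w" unfolding supp_def by simp
    obtain x0 where x0: "0 < pmf D x0" using pmf_pos_ex[of D] by auto
    define \<alpha> where "\<alpha> = psiD D (x0, x0)"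
    have \<alpha>0: "\<alpha> \<noteq> 0" using x0 by (simp add: \<alpha>_def psiD_def)
    have mstruct: "m (((r, x), e), u) * \<alpha> = m (((r, x0), x0), u) * psiD D (x, e)"
      if mr0: "m \<in> op_range \<rho>c" for m r x e u
    proof -
      obtain u' where m: "m = op_apply \<rho>c u'" using mr0 unfolding op_range_def by blast
      define R where "R r b' = \<rho>' r (fst (fst (fst b'))) * cnj (psiD D (snd (fst (fst b')), snd (fst b'))) * cnj (\<delta> (snd b')) * u' b'" for r b'
      have e1: "\<rho>c b b' * u' b' = (psiD D (snd (fst (fst b)), snd (fst b)) * \<delta> (snd b)) * R (fst (fst (fst b))) b'" for b b'
        by (simp add: \<rho>c_def tensor_op_def f0_def g0_def R_def algebra_simps)
      have e2: "m b = (psiD D (snd (fst (fst b)), snd (fst b)) * \<delta> (snd b)) * infsum (R (fst (fst (fst b)))) UNIV" for b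
        unfolding m op_apply_def e1 by (rule infsum_cmult_right')
      show ?thesis unfolding e2 \<alpha>_def by simp
    qed
    have K: "w (((r, x), e), u) * \<alpha> = w (((r, x0), x0), u) * psiD D (x, e)" for r x e u
    proof -
      define a1 where "a1 = (((r, x), e), u)"
      define a2 where "a2 = (((r, x0), x0), u)"
      define \<beta> where "\<beta> = psiD D (x, e)"
      define \<Delta> where "\<Delta> = cmod (w a1 * \<alpha> - w a2 * \<beta>)"
      define M where "M = cmod \<alpha> + cmod \<beta>"
      have M0: "0 \<le> M" by (simp add: M_def)
      have bnd: "\<Delta> \<le> \<epsilon> * M" if \<epsilon>: "\<epsilon> > 0" for \<epsilon>
      proof -
        obtain m where mr: "m \<in> op_range \<rho>c" and close: "l2norm (\<lambda>a. w a - m a) < \<epsilon>"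
          using w \<epsilon> unfolding supp_def by blast
        obtain u' where m: "m = op_apply \<rho>c u'" and u': "is_l2 u'" using mr unfolding op_range_def by blast
        have ml2: "is_l2 m" unfolding m using op_apply_l2[OF \<rho>cm u'] .
        have dl2: "is_l2 (\<lambda>a. w a - m a)" using l2_diff[OF wl2 ml2] .
        have p1: "cmod (w a - m a) \<le> \<epsilon>" for a
          using l2_point[OF dl2, of a] close by simp
        have ms: "m a1 * \<alpha> = m a2 * \<beta>" unfolding a1_def a2_def \<beta>_def using mstruct[OF mr] .
        have "w a1 * \<alpha> - w a2 * \<beta> = (w a1 - m a1) * \<alpha> - (w a2 - m a2) * \<beta>"
          using ms by (simp add: algebra_simps)
        then have "\<Delta> = cmod ((w a1 - m a1) * \<alpha> - (w a2 - m a2) * \<beta>)" unfolding \<Delta>_def by simp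
        also have "\<dots> \<le> cmod (w a1 - m a1) * cmod \<alpha> + cmod (w a2 - m a2) * cmod \<beta>"
          by (metis norm_mult norm_triangle_ineq4)
        also have "\<dots> \<le> \<epsilon> * cmod \<alpha> + \<epsilon> * cmod \<beta>"
          using p1 by (intro add_mono mult_right_mono) auto
        finally show ?thesis by (simp add: M_def algebra_simps)
      qed
      have "\<Delta> \<le> 0"
      proof (rule ccontr)
        assume "\<not> \<Delta> \<le> 0"
        then have D0: "\<Delta> > 0" by simp
        have "\<Delta> \<le> (\<Delta> / (2 * (M + 1))) * M" using D0 M0 by (intro bnd) auto
        also have "\<dots> < \<Delta>"
        proof -
          have "0 \<le> M * \<Delta>" using D0 M0 by simp
          then have "0 < M * \<Delta> + \<Delta> * 2" using D0 by linarith
          then show ?thesis using D0 M0 by (simp add: field_simps)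
        qed
        finally show False by simp
      qed
      then have "\<Delta> = 0" unfolding \<Delta>_def by simp
      then show ?thesis unfolding \<Delta>_def a1_def a2_def \<beta>_def by simp
    qed
    show "w \<in> pred_ext_U (distr D)"
      unfolding pred_ext_U_def
    proof (intro CollectI conjI allI)
      show "is_l2 w" by (rule wl2)
      fix u :: 'u
      define j where "j r = (((r, x0), x0), u)" for r :: 'r
      have ij: "inj j" by (simp add: inj_def j_def)
      have l: "is_l2 (\<lambda>r. (w \<circ> j) r * (1 / \<alpha>))"
        using l2_scale(1)[OF l2_restrict(1)[OF ij wl2]] .
      have "w (((r, x), e), u) = (w \<circ> j) r * (1 / \<alpha>) * psiD D (x, e)" for r x e
        using K[of r x e u] \<alpha>0 by (simp add: j_def field_simps)
      then show "(\<lambda>z. w (z, u)) \<in> distr D"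
        unfolding distr_def using l by auto
    qed
  qed
  show ?thesis unfolding models_def using \<rho>cm sep supp ptr by blast
qed

lemma psi_real: "cnj (psiD D p) = psiD D p"
  by (cases p) (simp add: psiD_def)

lemma psi_sq: "psiD D (x, x) * psiD D (x, x) = complex_of_real (pmf D x)"
  by (simp add: psiD_def of_real_mult[symmetric] real_sqrt_mult_self)

lemma mixed_herm: assumes "mixed \<rho>" shows "\<rho> a b = cnj (\<rho> b a)"
proof -
  obtain v where v3: "\<And>a b. (\<lambda>k. v k a * cnj (v k b)) sums \<rho> a b"
    using assms unfolding mixed_def by blast
  have "(\<lambda>k. cnj (v k b * cnj (v k a))) sums cnj (\<rho> b a)"
    using v3[of b a] by (simp only: sums_cnj)
  then have "(\<lambda>k. v k a * cnj (v k b)) sums cnj (\<rho> b a)" by (simp add: mult.commute)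
  then show ?thesis using v3[of a b] sums_unique2 by blast
qed

lemma dir_ab:
  fixes D :: "'t pmf" and \<rho> :: "('r \<times> 't) \<Rightarrow> ('r \<times> 't) \<Rightarrow> complex"
  assumes m: "mixed \<rho>" and mod: "models TYPE('u) \<rho> (distr D)"
  shows "\<exists>\<rho>'. mixed \<rho>' \<and> \<rho> = tensor_op \<rho>' (rhoD D)"
proof -
  obtain \<rho>c :: "((('r \<times> 't) \<times> 't) \<times> 'u) \<Rightarrow> ((('r \<times> 't) \<times> 't) \<times> 'u) \<Rightarrow> complex"
    where mc: "mixed \<rho>c" and sp: "supp \<rho>c \<subseteq> pred_ext_U (distr D)" and pt: "ptrace_EU \<rho>c = \<rho>"
    using mod unfolding models_def by blast
  obtain x0 where x0: "0 < pmf D x0" using pmf_pos_ex[of D] by auto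
  define \<alpha> where "\<alpha> = psiD D (x0, x0)"
  have \<alpha>0: "\<alpha> \<noteq> 0" using x0 by (simp add: \<alpha>_def psiD_def)
  have \<alpha>r: "cnj \<alpha> = \<alpha>" unfolding \<alpha>_def by (rule psi_real)
  have col: "(\<lambda>a. \<rho>c a b) \<in> supp \<rho>c" for b
  proof -
    define \<delta> where "\<delta> b' = (if b' = b then 1 else (0::complex))" for b'
    have "(\<lambda>a. (cmod (\<delta> a))\<^sup>2) summable_on UNIV \<longleftrightarrow> (\<lambda>a. (cmod (\<delta> a))\<^sup>2) summable_on {b}"
      by (rule summable_on_cong_neutral) (auto simp: \<delta>_def)
    then have dl2: "is_l2 \<delta>" unfolding is_l2_def by simp
    have "op_apply \<rho>c \<delta> a = \<rho>c a b" for a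
    proof -
      have "op_apply \<rho>c \<delta> a = infsum (\<lambda>b'. \<rho>c a b' * \<delta> b') {b}"
        unfolding op_apply_def by (rule infsum_cong_neutral) (auto simp: \<delta>_def)
      then show ?thesis by (simp add: \<delta>_def)
    qed
    then have e: "op_apply \<rho>c \<delta> = (\<lambda>a. \<rho>c a b)" by auto
    have inr: "(\<lambda>a. \<rho>c a b) \<in> op_range \<rho>c" unfolding op_range_def using dl2 e by auto
    have l2: "is_l2 (\<lambda>a. \<rho>c a b)" using op_apply_l2[OF mc dl2] e by simp
    show ?thesis unfolding supp_def
    proof (intro CollectI conjI allI impI)
      show "is_l2 (\<lambda>a. \<rho>c a b)" by (rule l2)
      fix \<epsilon> :: real assume "0 < \<epsilon>"
      then show "\<exists>r\<in>op_range \<rho>c. l2norm (\<lambda>a. \<rho>c a b - r a) < \<epsilon>"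
        using inr by (intro bexI[of _ "\<lambda>a. \<rho>c a b"]) (simp_all add: l2norm_def)
    qed
  qed
  have key1: "\<rho>c (((r, x), e), u) b * \<alpha> = \<rho>c (((r, x0), x0), u) b * psiD D (x, e)" for r x e u b
  proof -
    have "(\<lambda>z. \<rho>c (z, u) b) \<in> distr D" using sp col[of b] unfolding pred_ext_U_def by blast
    then obtain \<phi> where "\<And>r x e. \<rho>c (((r, x), e), u) b = \<phi> r * psiD D (x, e)"
      unfolding distr_def by blast
    then show ?thesis by (simp add: \<alpha>_def)
  qed
  have herm: "\<rho>c a b = cnj (\<rho>c b a)" for a b using mixed_herm[OF mc] .
  have key2: "\<rho>c (((r, x), e), u) (((r', x'), e'), u') * (\<alpha> * \<alpha>)
      = psiD D (x, e) * psiD D (x', e') * \<rho>c (((r, x0), x0), u) (((r', x0), x0), u')"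
    for r x e u r' x' e' u'
  proof -
    define a1 where "a1 = (((r, x), e), u)"
    define b1 where "b1 = (((r', x'), e'), u')"
    define a2 where "a2 = (((r, x0), x0), u)"
    define b2 where "b2 = (((r', x0), x0), u')"
    have s1: "\<rho>c a1 b1 * \<alpha> = \<rho>c a2 b1 * psiD D (x, e)" unfolding a1_def a2_def by (rule key1)
    have s2: "\<rho>c b1 a2 * \<alpha> = \<rho>c b2 a2 * psiD D (x', e')" unfolding b1_def b2_def by (rule key1)
    have "\<rho>c a2 b1 * \<alpha> = cnj (\<rho>c b1 a2 * \<alpha>)" using herm[of a2 b1] \<alpha>r by simp
    also have "\<dots> = cnj (\<rho>c b2 a2) * psiD D (x', e')" unfolding s2 by (simp add: psi_real)
    also have "\<dots> = \<rho>c a2 b2 * psiD D (x', e')" using herm[of a2 b2] by simp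
    finally have s3: "\<rho>c a2 b1 * \<alpha> = \<rho>c a2 b2 * psiD D (x', e')" .
    have "\<rho>c a1 b1 * (\<alpha> * \<alpha>) = (\<rho>c a1 b1 * \<alpha>) * \<alpha>" by (simp add: mult.assoc)
    also have "\<dots> = (\<rho>c a2 b1 * \<alpha>) * psiD D (x, e)" unfolding s1 by (simp add: algebra_simps)
    also have "\<dots> = psiD D (x, e) * psiD D (x', e') * \<rho>c a2 b2" unfolding s3 by (simp add: algebra_simps)
    finally show ?thesis unfolding a1_def b1_def a2_def b2_def .
  qed
  define H where "H r r' = (\<Sum>\<^sub>\<infinity>u. \<rho>c (((r, x0), x0), u) (((r', x0), x0), u))" for r r'
  define \<rho>' where "\<rho>' r r' = H r r' / (\<alpha> * \<alpha>)" for r r'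
  have form: "\<rho> (r, x) (r', x') = rhoD D x x' * \<rho>' r r'" for r x r' x'
  proof -
    have trm: "\<rho>c (((r, x), e), u) (((r', x'), e), u)
        = psiD D (x, e) * psiD D (x', e) / (\<alpha> * \<alpha>) * \<rho>c (((r, x0), x0), u) (((r', x0), x0), u)" for e u
      using key2[of r x e u r' x' e u] \<alpha>0 by (simp add: field_simps)
    have "\<rho> (r, x) (r', x') = (\<Sum>\<^sub>\<infinity>(e, u). \<rho>c (((r, x), e), u) (((r', x'), e), u))"
      using pt unfolding ptrace_EU_def by auto
    also have "\<dots> = rhoD D x x' * \<rho>' r r'"
    proof (cases "x = x'")
      case False
      have "(\<Sum>\<^sub>\<infinity>(e, u). \<rho>c (((r, x), e), u) (((r', x'), e), u)) = infsum (\<lambda>_::'t \<times> 'u. 0) UNIV"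
        by (rule infsum_cong) (use False in \<open>auto simp: trm psiD_def\<close>)
      then show ?thesis using False by (simp add: rhoD_def)
    next
      case True
      have "(\<Sum>\<^sub>\<infinity>(e, u). \<rho>c (((r, x), e), u) (((r', x'), e), u))
          = infsum (\<lambda>(e, u). \<rho>c (((r, x), e), u) (((r', x'), e), u)) (Pair x ` UNIV)"
      proof (rule infsum_cong_neutral)
        fix eu :: "'t \<times> 'u" assume "eu \<in> UNIV - range (Pair x)"
        then obtain e u where eu: "eu = (e, u)" and ne: "e \<noteq> x" by (cases eu) auto
        show "(\<lambda>(e, u). \<rho>c (((r, x), e), u) (((r', x'), e), u)) eu = 0"
          using ne unfolding eu by (simp add: trm psiD_def)
      qed auto
      also have "\<dots> = (\<Sum>\<^sub>\<infinity>u. \<rho>c (((r, x), x), u) (((r', x'), x), u))"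
        by (subst infsum_reindex) (auto simp: o_def inj_def)
      also have "\<dots> = (\<Sum>\<^sub>\<infinity>u. (psiD D (x, x) * psiD D (x, x) / (\<alpha> * \<alpha>)) * \<rho>c (((r, x0), x0), u) (((r', x0), x0), u))"
        unfolding trm using True by simp
      also have "\<dots> = (psiD D (x, x) * psiD D (x, x) / (\<alpha> * \<alpha>)) * H r r'"
        unfolding H_def by (rule infsum_cmult_right')
      also have "\<dots> = rhoD D x x' * \<rho>' r r'"
        using True by (simp add: psi_sq rhoD_def \<rho>'_def)
      finally show ?thesis .
    qed
    finally show ?thesis .
  qed
  have eq: "\<rho> = tensor_op \<rho>' (rhoD D)"
    by (intro ext) (auto simp: tensor_op_def form mult.commute split: prod.splits)
  have mr': "mixed \<rho>'"
  proof -
    have "mixed (\<lambda>r r'. \<rho> ((\<lambda>r. (r, x0)) r) ((\<lambda>r. (r, x0)) r') * ((\<lambda>_. 1 / \<alpha>) r * cnj ((\<lambda>_. 1 / \<alpha>) r')))"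
    proof (rule mixed_pull[OF m, where C="cmod (1 / \<alpha>)"])
      fix w :: "'r \<times> 't \<Rightarrow> complex" assume w: "is_l2 w"
      have ij: "inj (\<lambda>r::'r. (r, x0))" by (simp add: inj_def)
      have 1: "is_l2 (w \<circ> (\<lambda>r. (r, x0)))" and 2: "l2norm (w \<circ> (\<lambda>r. (r, x0))) \<le> l2norm w"
        using l2_restrict[OF ij w] by auto
      have 3: "is_l2 (\<lambda>r. (w \<circ> (\<lambda>r. (r, x0))) r * (1 / \<alpha>))"
        by (rule l2_scale(1)[OF 1])
      have 4: "l2norm (\<lambda>r. (w \<circ> (\<lambda>r. (r, x0))) r * (1 / \<alpha>)) = cmod (1 / \<alpha>) * l2norm (w \<circ> (\<lambda>r. (r, x0)))"
        by (rule l2_scale(2)[OF 1])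
      have 5: "cmod (1 / \<alpha>) * l2norm (w \<circ> (\<lambda>r. (r, x0))) \<le> cmod (1 / \<alpha>) * l2norm w"
        using 2 by (rule mult_left_mono) simp
      show "is_l2 (\<lambda>r. w ((\<lambda>r. (r, x0)) r) * (\<lambda>_. 1 / \<alpha>) r) \<and>
            l2norm (\<lambda>r. w ((\<lambda>r. (r, x0)) r) * (\<lambda>_. 1 / \<alpha>) r) \<le> cmod (1 / \<alpha>) * l2norm w"
        using 3 4 5 unfolding o_def by simp
    qed simp
    moreover have "(\<lambda>r r'. \<rho> ((\<lambda>r. (r, x0)) r) ((\<lambda>r. (r, x0)) r') * ((\<lambda>_. 1 / \<alpha>) r * cnj ((\<lambda>_. 1 / \<alpha>) r'))) = \<rho>'"
    proof (intro ext)
      fix r r'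
      have "\<rho> (r, x0) (r', x0) = \<alpha> * \<alpha> * \<rho>' r r'"
        using form[of r x0 r' x0] by (simp add: rhoD_def \<alpha>_def psi_sq)
      then show "\<rho> ((\<lambda>r. (r, x0)) r) ((\<lambda>r. (r, x0)) r') * ((\<lambda>_. 1 / \<alpha>) r * cnj ((\<lambda>_. 1 / \<alpha>) r')) = \<rho>' r r'"
        using \<alpha>0 \<alpha>r by (simp add: field_simps)
    qed
    ultimately show ?thesis by simp
  qed
  show ?thesis using mr' eq by blast
qed

theorem lemma4:
  fixes D :: "'t pmf"
    and \<rho> :: "('r \<times> 't) \<Rightarrow> ('r \<times> 't) \<Rightarrow> complex"
  assumes "mixed \<rho>"
  shows "models TYPE('u) \<rho> (distr D) \<longleftrightarrow>
           (\<exists>\<rho>' :: 'r \<Rightarrow> 'r \<Rightarrow> complex. mixed \<rho>' \<and> \<rho> = tensor_op \<rho>' (rhoD D))"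
  using dir_ab[OF assms] dir_ba by blast

end
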